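(* Let $R \in \mathfrak{D}$ and $\mathfrak{D}' \subseteq \mathfrak{D}$, and suppose that one of the following holds: (i) $\mathfrak{D}' = \mathfrak{D}$; (ii) $R \in \mathfrak{T}_a$ and $\mathfrak{T}_a \subseteq \mathfrak{D}' \subseteq \mathfrak{D}$; (iii) $\mathfrak{D}' = \mathfrak{P}$ or $\mathfrak{D}' = \mathfrak{P}^*$, and $R \in \mathfrak{D}'$. Then for every $S \in \mathfrak{D}$ the following are equivalent: (a) $R \sqsubseteq_\Gamma S$ with respect to $\mathfrak{D}'$; (b) $\# \mathcal{S}(G,R) \leq \# \mathcal{S}(G,S)$ for all $G \in \mathfrak{D}'$. Moreover, (b) implies $\# \mathcal{H}(G,R) \leq \# \mathcal{H}(G,S)$ for all $G \in \mathfrak{D}'$.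
   Context: **Digraphs and homomorphisms.** - A digraph $G$ is a pair $(V(G),A(G))$, where $V(G)$ is a finite non-empty set and $A(G) \subseteq V(G)\times V(G)$. Arcs are written $vw$. - An arc $vv$ is a loop. An arc $vw$ with $v\neq w$ is proper. $G^*$ denotes $G$ with all loops removed. - A homomorphism $\xi: G\to H$ is a map $V(G)\to V(H)$ such that $\xi(v)\xi(w)\in A(H)$ for all $vw\in A(G)$. $\mathcal{H}(G,H)$ is the set of homomorphisms. - A homomorphism is strict if it maps every proper arc of $G$ to a proper arc of $H$. $\mathcal{S}(G,H)$ is the set of strict homomorphisms from $G$ to $H$. - A walk in $G$ is a sequence $v_0,\dots,v_I$ with $I\geq 1$ and $v_{i-1}v_i\in A(G)$ for all $i$. It is closed if $v_0=v_I$, and trivial if all $v_i$ are equal. **Classes of digraphs.** - $\mathfrak{D}$ is the class of all digraphs. - $\mathfrak{P}$ is the class of finite posets, i.e. reflexive, antisymmetric, transitive digraphs. - $\mathfrak{P}^* = \{P^* : P\in\mathfrak{P}\}$. - $\mathfrak{T}_a = \{G\in\mathfrak{D} : G^* \text{ contains no closed walk}\}$. Equivalently, every closed walk in $G$ is trivial. **Connectivity.** - Two vertices $u,w$ are adjacent if $uw\in A(G)$ or $wu\in A(G)$. - For $X\subseteq V(G)$ and $v,w\in X$, the vertices $v$ and $w$ are connected in $X$ if $v=w$, or if there are $z_0=v,z_1,\dots,z_I=w$ in $X$ with $z_{i-1},z_i$ adjacent for all $i$. - $\gamma_X(v)$ is the set of $w\in X$ connected to $v$ in $X$. - For any map $\xi$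 from $V(G)$ to a set, $\Gamma_\xi(v) := \gamma_{\xi^{-1}(\xi(v))}(v)$. **Schemes.** - For a class $\mathfrak{D}'\subseteq\mathfrak{D}$, let $\mathfrak{D}'_r$ be a fixed system of representatives of $\mathfrak{D}'$ up to isomorphism. - For $R,S\in\mathfrak{D}$, a Hom-scheme from $R$ to $S$ with respect to $\mathfrak{D}'$ is a family $\rho=(\rho_G)_{G\in\mathfrak{D}'_r}$ of maps $\rho_G:\mathcal{H}(G,R)\to\mathcal{H}(G,S)$. - It is strong if every $\rho_G$ is injective. - It is a $\Gamma$-scheme if $\Gamma_{\rho_G(\xi)}(v)=\Gamma_\xi(v)$ for all $G\in\mathfrak{D}'_r$, $\xi\in\mathcal{H}(G,R)$ and $v\in V(G)$. - $R\sqsubseteq_\Gamma S$ with respect to $\mathfrak{D}'$ means that a strong $\Gamma$-scheme from $R$ to $S$ with respect to $\mathfrak{D}'$ exists. *)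

theory Defs
  imports "HOL-Library.FuncSet"
begin

type_synonym 'a digraph = "'a set \<times> ('a \<times> 'a) set"

definition verts :: "'a digraph \<Rightarrow> 'a set" where "verts G = fst G"
definition arcs :: "'a digraph \<Rightarrow> ('a \<times> 'a) set" where "arcs G = snd G"

definition is_digraph :: "'a digraph \<Rightarrow> bool" where
  "is_digraph G \<longleftrightarrow> finite (verts G) \<and> verts G \<noteq> {} \<and> arcs G \<subseteq> verts G \<times> verts G"

definition loopfree :: "'a digraph \<Rightarrow> 'a digraph" where
  "loopfree G = (verts G, {(v, w) \<in> arcs G. v \<noteq> w})"

text \<open>Maps V(G) -> V(H) are represented extensionally (undefined outside V(G)).\<close>
definition Hom :: "'a digraph \<Rightarrow> 'b digraph \<Rightarrow> ('a \<Rightarrow> 'b) set" where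
  "Hom G H = {\<xi> \<in> verts G \<rightarrow>\<^sub>E verts H. \<forall>(v, w) \<in> arcs G. (\<xi> v, \<xi> w) \<in> arcs H}"

definition Strict :: "'a digraph \<Rightarrow> 'b digraph \<Rightarrow> ('a \<Rightarrow> 'b) set" where
  "Strict G H = {\<xi> \<in> Hom G H. \<forall>(v, w) \<in> arcs G. v \<noteq> w \<longrightarrow> \<xi> v \<noteq> \<xi> w}"

definition digraph_iso :: "'a digraph \<Rightarrow> 'b digraph \<Rightarrow> bool" where
  "digraph_iso G H \<longleftrightarrow> (\<exists>f. bij_betw f (verts G) (verts H) \<and>
     (\<forall>v \<in> verts G. \<forall>w \<in> verts G. (v, w) \<in> arcs G \<longleftrightarrow> (f v, f w) \<in> arcs H))"

text \<open>A walk v_0,...,v_I with I >= 1, as a list of length I+1.\<close>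
definition is_walk :: "'a digraph \<Rightarrow> 'a list \<Rightarrow> bool" where
  "is_walk G vs \<longleftrightarrow> length vs \<ge> 2 \<and> (\<forall>i. Suc i < length vs \<longrightarrow> (vs ! i, vs ! Suc i) \<in> arcs G)"

definition is_closed_walk :: "'a digraph \<Rightarrow> 'a list \<Rightarrow> bool" where
  "is_closed_walk G vs \<longleftrightarrow> is_walk G vs \<and> hd vs = last vs"

definition is_poset :: "'a digraph \<Rightarrow> bool" where
  "is_poset G \<longleftrightarrow> is_digraph G
     \<and> (\<forall>v \<in> verts G. (v, v) \<in> arcs G)
     \<and> (\<forall>v w. (v, w) \<in> arcs G \<and> (w, v) \<in> arcs G \<longrightarrow> v = w)
     \<and> (\<forall>u v w. (u, v) \<in> arcs G \<and> (v, w) \<in> arcs G \<longrightarrow> (u, w) \<in> arcs G)"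

definition is_poset_star :: "'a digraph \<Rightarrow> bool" where
  "is_poset_star G \<longleftrightarrow> (\<exists>P. is_poset P \<and> G = loopfree P)"

definition in_Ta :: "'a digraph \<Rightarrow> bool" where
  "in_Ta G \<longleftrightarrow> is_digraph G \<and> \<not> (\<exists>vs. is_closed_walk (loopfree G) vs)"

definition adjacent :: "'a digraph \<Rightarrow> 'a \<Rightarrow> 'a \<Rightarrow> bool" where
  "adjacent G u w \<longleftrightarrow> (u, w) \<in> arcs G \<or> (w, u) \<in> arcs G"

definition connected_in :: "'a digraph \<Rightarrow> 'a set \<Rightarrow> 'a \<Rightarrow> 'a \<Rightarrow> bool" where
  "connected_in G X v w \<longleftrightarrow> v = w \<or>
     (\<exists>zs. length zs \<ge> 2 \<and> hd zs = v \<and> last zs = w \<and> set zs \<subseteq> X \<and>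
        (\<forall>i. Suc i < length zs \<longrightarrow> adjacent G (zs ! i) (zs ! Suc i)))"

definition gamma :: "'a digraph \<Rightarrow> 'a set \<Rightarrow> 'a \<Rightarrow> 'a set" where
  "gamma G X v = {w \<in> X. connected_in G X v w}"

definition Gamma :: "'a digraph \<Rightarrow> ('a \<Rightarrow> 'b) \<Rightarrow> 'a \<Rightarrow> 'a set" where
  "Gamma G \<xi> v = gamma G {u \<in> verts G. \<xi> u = \<xi> v} v"

text \<open>Dr is a system of representatives of the class D' up to isomorphism.
  Test digraphs G live on vertex type nat (every finite digraph is isomorphic to one).\<close>
definition rep_system :: "nat digraph set \<Rightarrow> nat digraph set \<Rightarrow> bool" where
  "rep_system Dr D' \<longleftrightarrow> Dr \<subseteq> D' \<and> (\<forall>G \<in> D'. \<exists>!H. H \<in> Dr \<and> digraph_iso G H)"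

definition hom_scheme ::
  "nat digraph set \<Rightarrow> 'a digraph \<Rightarrow> 'b digraph \<Rightarrow> (nat digraph \<Rightarrow> (nat \<Rightarrow> 'a) \<Rightarrow> (nat \<Rightarrow> 'b)) \<Rightarrow> bool" where
  "hom_scheme Dr R S \<rho> \<longleftrightarrow> (\<forall>G \<in> Dr. \<forall>\<xi> \<in> Hom G R. \<rho> G \<xi> \<in> Hom G S)"

definition strong_scheme ::
  "nat digraph set \<Rightarrow> 'a digraph \<Rightarrow> (nat digraph \<Rightarrow> (nat \<Rightarrow> 'a) \<Rightarrow> (nat \<Rightarrow> 'b)) \<Rightarrow> bool" where
  "strong_scheme Dr R \<rho> \<longleftrightarrow> (\<forall>G \<in> Dr. inj_on (\<rho> G) (Hom G R))"

definition Gamma_scheme ::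
  "nat digraph set \<Rightarrow> 'a digraph \<Rightarrow> (nat digraph \<Rightarrow> (nat \<Rightarrow> 'a) \<Rightarrow> (nat \<Rightarrow> 'b)) \<Rightarrow> bool" where
  "Gamma_scheme Dr R \<rho> \<longleftrightarrow>
     (\<forall>G \<in> Dr. \<forall>\<xi> \<in> Hom G R. \<forall>v \<in> verts G. Gamma G (\<rho> G \<xi>) v = Gamma G \<xi> v)"

definition gamma_below :: "nat digraph set \<Rightarrow> 'a digraph \<Rightarrow> 'b digraph \<Rightarrow> bool" where
  "gamma_below Dr R S \<longleftrightarrow>
     (\<exists>\<rho>. hom_scheme Dr R S \<rho> \<and> strong_scheme Dr R \<rho> \<and> Gamma_scheme Dr R \<rho>)"

end

theory Submission
  imports Defs
begin


definition fe :: "'a digraph \<Rightarrow> 'a set \<Rightarrow> ('a \<times> 'a) set" where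
  "fe G X = {(a,b). a \<in> X \<and> b \<in> X \<and> adjacent G a b}"

lemma fe_sym: "sym (fe G X)"
  unfolding sym_def fe_def adjacent_def by auto

lemma path_rt:
  "zs \<noteq> [] \<Longrightarrow> set zs \<subseteq> X \<Longrightarrow> (\<forall>i. Suc i < length zs \<longrightarrow> adjacent G (zs!i) (zs!Suc i))
   \<Longrightarrow> (hd zs, last zs) \<in> (fe G X)\<^sup>*"
proof (induction zs)
  case Nil then show ?case by simp
next
  case (Cons a zs)
  show ?case
  proof (cases "zs = []")
    case True then show ?thesis by simp
  next
    case False
    have "adjacent G ((a#zs)!0) ((a#zs)!Suc 0)" using Cons.prems(3) False by auto
    then have adj: "adjacent G a (hd zs)" using False by (simp add: hd_conv_nth)
    have "hd zs \<in> X" using Cons.prems(2) False by auto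
    then have e: "(a, hd zs) \<in> fe G X" using adj Cons.prems(2) unfolding fe_def by auto
    have "\<forall>i. Suc i < length zs \<longrightarrow> adjacent G (zs!i) (zs!Suc i)"
    proof (intro allI impI)
      fix i assume "Suc i < length zs"
      then have "Suc (Suc i) < length (a#zs)" by simp
      then have "adjacent G ((a#zs)!Suc i) ((a#zs)!Suc (Suc i))" using Cons.prems(3) by blast
      then show "adjacent G (zs!i) (zs!Suc i)" by simp
    qed
    then have "(hd zs, last zs) \<in> (fe G X)\<^sup>*" using Cons.IH False Cons.prems(2) by auto
    then show ?thesis using e False by (auto intro: converse_rtrancl_into_rtrancl)
  qed
qed

lemma rt_to_path:
  assumes "(v,w) \<in> (fe G X)\<^sup>*" "w \<in> X"
  shows "\<exists>zs. zs \<noteq> [] \<and> hd zs = v \<and> last zs = w \<and> set zs \<subseteq> X \<and>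
           (\<forall>i. Suc i < length zs \<longrightarrow> adjacent G (zs!i) (zs!Suc i))"
  using assms(1)
proof (induction rule: converse_rtrancl_induct)
  case base
  show ?case by (rule exI[of _ "[w]"]) (use assms(2) in auto)
next
  case (step a b)
  then obtain zs where zs: "zs \<noteq> []" "hd zs = b" "last zs = w" "set zs \<subseteq> X"
    "\<forall>i. Suc i < length zs \<longrightarrow> adjacent G (zs!i) (zs!Suc i)" by blast
  have ab: "a \<in> X" "adjacent G a b" using step(1) unfolding fe_def by auto
  show ?case
  proof (rule exI[of _ "a#zs"], intro conjI)
    show "\<forall>i. Suc i < length (a#zs) \<longrightarrow> adjacent G ((a#zs)!i) ((a#zs)!Suc i)"
    proof (intro allI impI)
      fix i assume i: "Suc i < length (a#zs)"
      show "adjacent G ((a#zs)!i) ((a#zs)!Suc i)"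
      proof (cases i)
        case 0 then show ?thesis using ab zs by (simp add: hd_conv_nth)
      next
        case (Suc j) then show ?thesis using i zs(5) by simp
      qed
    qed
  qed (use zs ab in auto)
qed

lemma rt_in: "(v,w) \<in> (fe G X)\<^sup>* \<Longrightarrow> v \<in> X \<Longrightarrow> w \<in> X"
  by (induction rule: rtrancl_induct) (auto simp: fe_def)

lemma gamma_rt: "v \<in> X \<Longrightarrow> gamma G X v = {w. (v,w) \<in> (fe G X)\<^sup>*}"
proof (intro set_eqI iffI)
  fix w assume v: "v \<in> X" and w: "w \<in> gamma G X v"
  then have "connected_in G X v w" unfolding gamma_def by auto
  then show "w \<in> {w. (v,w) \<in> (fe G X)\<^sup>*}"
    unfolding connected_in_def
  proof (elim disjE exE conjE)
    fix zs assume "2 \<le> length zs" "hd zs = v" "last zs = w" "set zs \<subseteq> X"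
      "\<forall>i. Suc i < length zs \<longrightarrow> adjacent G (zs ! i) (zs ! Suc i)"
    then show ?thesis using path_rt[of zs X G] by (cases zs) auto
  qed auto
next
  fix w assume v: "v \<in> X" and w: "w \<in> {w. (v,w) \<in> (fe G X)\<^sup>*}"
  then have r: "(v,w) \<in> (fe G X)\<^sup>*" by simp
  have wX: "w \<in> X" using rt_in[OF r v] .
  obtain zs where zs: "zs \<noteq> []" "hd zs = v" "last zs = w" "set zs \<subseteq> X"
    "\<forall>i. Suc i < length zs \<longrightarrow> adjacent G (zs!i) (zs!Suc i)" using rt_to_path[OF r wX] by blast
  have "connected_in G X v w"
  proof (cases "length zs \<ge> 2")
    case True then show ?thesis unfolding connected_in_def using zs by blast
  next
    case False
    then obtain x where "zs = [x]" using zs(1) by (cases zs rule: list.exhaust) (auto simp: Suc_le_eq)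
    then show ?thesis using zs unfolding connected_in_def by simp
  qed
  then show "w \<in> gamma G X v" unfolding gamma_def using wX by simp
qed



definition fib :: "'a digraph \<Rightarrow> ('a \<Rightarrow> 'b) \<Rightarrow> 'a \<Rightarrow> 'a set" where
  "fib G \<xi> v = {u \<in> verts G. \<xi> u = \<xi> v}"

lemma Gamma_rt: "v \<in> verts G \<Longrightarrow> Gamma G \<xi> v = {w. (v,w) \<in> (fe G (fib G \<xi> v))\<^sup>*}"
  unfolding Gamma_def fib_def[symmetric] by (rule gamma_rt) (simp add: fib_def)

lemma Gamma_sub: "Gamma G \<xi> v \<subseteq> fib G \<xi> v"
  unfolding Gamma_def gamma_def fib_def by auto

lemma v_in_Gamma: "v \<in> verts G \<Longrightarrow> v \<in> Gamma G \<xi> v"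
  by (simp add: Gamma_rt)

lemma Gamma_finite: "is_digraph G \<Longrightarrow> finite (Gamma G \<xi> v)"
proof -
  assume "is_digraph G"
  then have "finite (fib G \<xi> v)" unfolding fib_def is_digraph_def by auto
  then show ?thesis using Gamma_sub[of G \<xi> v] by (rule finite_subset[rotated])
qed

lemma Gamma_trans:
  assumes v: "v \<in> verts G" and u: "u \<in> Gamma G \<xi> v"
  shows "Gamma G \<xi> u = Gamma G \<xi> v"
proof -
  have uf: "u \<in> verts G" "\<xi> u = \<xi> v" using u Gamma_sub[of G \<xi> v] unfolding fib_def by auto
  have ff: "fib G \<xi> u = fib G \<xi> v" using uf unfolding fib_def by auto
  define E where "E = fe G (fib G \<xi> v)"
  have vu: "(v,u) \<in> E\<^sup>*" using u v unfolding E_def by (simp add: Gamma_rt)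
  have "sym (E\<^sup>*)" unfolding E_def by (rule sym_rtrancl[OF fe_sym])
  then have uv: "(u,v) \<in> E\<^sup>*" using vu by (meson symD)
  have "Gamma G \<xi> u = {w. (u,w) \<in> E\<^sup>*}" using uf ff Gamma_rt[of u G \<xi>] E_def by simp
  also have "\<dots> = {w. (v,w) \<in> E\<^sup>*}" using uv vu by (auto intro: rtrancl_trans)
  also have "\<dots> = Gamma G \<xi> v" using v Gamma_rt[of v G \<xi>] E_def by simp
  finally show ?thesis .
qed

lemma adj_Gamma:
  assumes "u \<in> verts G" "w \<in> verts G" "adjacent G u w" "\<xi> u = \<xi> w"
  shows "w \<in> Gamma G \<xi> u"
proof -
  have "(u,w) \<in> fe G (fib G \<xi> u)" using assms unfolding fe_def fib_def by auto
  then show ?thesis using assms(1) by (simp add: Gamma_rt)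
qed

lemma Gamma_mono:
  assumes v: "v \<in> verts G"
    and h: "\<And>u w. u \<in> verts G \<Longrightarrow> w \<in> verts G \<Longrightarrow> adjacent G u w \<Longrightarrow> f u = f w \<Longrightarrow> g u = g w"
  shows "Gamma G f v \<subseteq> Gamma G g v"
proof
  fix w assume "w \<in> Gamma G f v"
  then have r: "(v,w) \<in> (fe G (fib G f v))\<^sup>*" using v by (simp add: Gamma_rt)
  have "w \<in> fib G f v \<and> (v,w) \<in> (fe G (fib G g v))\<^sup>* \<and> w \<in> fib G g v"
    using r
  proof (induction rule: rtrancl_induct)
    case base then show ?case using v by (simp add: fib_def)
  next
    case (step y z)
    have yz: "y \<in> verts G" "z \<in> verts G" "adjacent G y z" "f y = f v" "f z = f v"
      using step(2) unfolding fe_def fib_def by auto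
    have "g y = g z" using h[OF yz(1,2,3)] yz(4,5) by simp
    then have "z \<in> fib G g v" using step(3) yz unfolding fib_def by auto
    moreover have "(y,z) \<in> fe G (fib G g v)" using step(3) calculation yz unfolding fe_def by auto
    ultimately show ?case using step(2,3) by (auto simp: fe_def intro: rtrancl_into_rtrancl)
  qed
  then show "w \<in> Gamma G g v" using v by (simp add: Gamma_rt)
qed

lemma Gamma_cong:
  assumes v: "v \<in> verts G"
    and h: "\<And>u w. u \<in> verts G \<Longrightarrow> w \<in> verts G \<Longrightarrow> adjacent G u w \<Longrightarrow> (f u = f w \<longleftrightarrow> g u = g w)"
  shows "Gamma G f v = Gamma G g v"
  using Gamma_mono[of v G f g] Gamma_mono[of v G g f] assms by blast

lemma strict_Gamma:
  assumes G: "is_digraph G" and xi: "\<xi> \<in> Strict G R" and v: "v \<in> verts G"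
  shows "Gamma G \<xi> v = {v}"
proof -
  have "fe G (fib G \<xi> v) \<subseteq> Id"
  proof
    fix p assume p: "p \<in> fe G (fib G \<xi> v)"
    obtain a b where ab: "p = (a,b)" by (cases p)
    have "adjacent G a b" "\<xi> a = \<xi> b" using p ab unfolding fe_def fib_def by auto
    then have "a = b" using xi unfolding Strict_def adjacent_def by auto
    then show "p \<in> Id" using ab by simp
  qed
  then have "\<And>w. (v,w) \<in> (fe G (fib G \<xi> v))\<^sup>* \<Longrightarrow> w = v"
  proof -
    fix w assume "(v,w) \<in> (fe G (fib G \<xi> v))\<^sup>*"
    then show "w = v" using \<open>fe G (fib G \<xi> v) \<subseteq> Id\<close>
      by (induction rule: rtrancl_induct) auto
  qed
  then show ?thesis using v Gamma_rt[of v G \<xi>] by auto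
qed

lemma Gamma_strict:
  assumes G: "is_digraph G" and xi: "\<xi> \<in> Hom G R" and h: "\<forall>v \<in> verts G. Gamma G \<xi> v = {v}"
  shows "\<xi> \<in> Strict G R"
  unfolding Strict_def
proof (safe)
  show "\<xi> \<in> Hom G R" by fact
next
  fix v w assume a: "(v,w) \<in> arcs G" "v \<noteq> w" "\<xi> v = \<xi> w"
  then have vw: "v \<in> verts G" "w \<in> verts G" using G unfolding is_digraph_def by auto
  have "w \<in> Gamma G \<xi> v" using adj_Gamma[OF vw] a unfolding adjacent_def by auto
  then show False using h vw a by auto
qed

definition repf :: "nat digraph \<Rightarrow> (nat \<Rightarrow> 'b) \<Rightarrow> nat \<Rightarrow> nat" where
  "repf G \<xi> v = Min (Gamma G \<xi> v)"

lemma repf_in: "is_digraph G \<Longrightarrow> v \<in> verts G \<Longrightarrow> repf G \<xi> v \<in> Gamma G \<xi> v"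
  unfolding repf_def using Gamma_finite v_in_Gamma by (metis Min_in empty_iff)

lemma repf_props:
  assumes "is_digraph G" "v \<in> verts G"
  shows "repf G \<xi> v \<in> verts G" "\<xi> (repf G \<xi> v) = \<xi> v"
  using repf_in[OF assms, of \<xi>] Gamma_sub[of G \<xi> v] unfolding fib_def by auto

lemma repf_eq:
  assumes "v \<in> verts G" "u \<in> Gamma G \<xi> v"
  shows "repf G \<xi> u = repf G \<xi> v"
  unfolding repf_def using Gamma_trans[OF assms] by simp

definition Qg :: "nat digraph \<Rightarrow> (nat \<Rightarrow> 'b) \<Rightarrow> nat digraph" where
  "Qg G \<xi> = (repf G \<xi> ` verts G, (\<lambda>(u,w). (repf G \<xi> u, repf G \<xi> w)) ` arcs G)"

lemma verts_Qg: "verts (Qg G \<xi>) = repf G \<xi> ` verts G"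
  and arcs_Qg: "arcs (Qg G \<xi>) = (\<lambda>(u,w). (repf G \<xi> u, repf G \<xi> w)) ` arcs G"
  unfolding Qg_def verts_def arcs_def by simp_all

lemma Qg_arc: "(u,w) \<in> arcs G \<Longrightarrow> (repf G \<xi> u, repf G \<xi> w) \<in> arcs (Qg G \<xi>)"
  unfolding arcs_Qg by force

lemma Qg_digraph: "is_digraph G \<Longrightarrow> is_digraph (Qg G \<xi>)"
  unfolding is_digraph_def verts_Qg arcs_Qg by auto

lemma Qg_verts_sub: "is_digraph G \<Longrightarrow> verts (Qg G \<xi>) \<subseteq> verts G"
  unfolding verts_Qg using repf_props by blast

lemma Qg_strict:
  assumes G: "is_digraph G" and xi: "\<xi> \<in> Hom G R"
  shows "restrict \<xi> (verts (Qg G \<xi>)) \<in> Strict (Qg G \<xi>) R"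
proof -
  have V: "\<And>v. v \<in> verts G \<Longrightarrow> \<xi> v \<in> verts R" using xi unfolding Hom_def by auto
  have A: "\<And>u w. (u,w) \<in> arcs G \<Longrightarrow> (\<xi> u, \<xi> w) \<in> arcs R" using xi unfolding Hom_def by auto
  have uw: "\<And>u w. (u,w) \<in> arcs G \<Longrightarrow> u \<in> verts G \<and> w \<in> verts G" using G unfolding is_digraph_def by auto
  have P1: "restrict \<xi> (verts (Qg G \<xi>)) \<in> verts (Qg G \<xi>) \<rightarrow>\<^sub>E verts R"
      using Qg_verts_sub[OF G, of \<xi>] V by auto
  have P2: "(restrict \<xi> (verts (Qg G \<xi>)) a, restrict \<xi> (verts (Qg G \<xi>)) b) \<in> arcs R
      \<and> (a \<noteq> b \<longrightarrow> restrict \<xi> (verts (Qg G \<xi>)) a \<noteq> restrict \<xi> (verts (Qg G \<xi>)) b)"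
    if "(a,b) \<in> arcs (Qg G \<xi>)" for a b
  proof -
    from that have "(a,b) \<in> (\<lambda>(u,w). (repf G \<xi> u, repf G \<xi> w)) ` arcs G"
      unfolding arcs_Qg .
    then obtain p where p: "p \<in> arcs G" "(a,b) = (\<lambda>(u,w). (repf G \<xi> u, repf G \<xi> w)) p" by blast
    obtain u w where "p = (u,w)" by (cases p)
    then have uw1: "(u,w) \<in> arcs G" "a = repf G \<xi> u" "b = repf G \<xi> w" using p by auto
    have ab: "a \<in> verts (Qg G \<xi>)" "b \<in> verts (Qg G \<xi>)" using uw1 uw unfolding verts_Qg by auto
    have xu: "\<xi> a = \<xi> u" "\<xi> b = \<xi> w" using uw1 uw[OF uw1(1)] repf_props(2)[OF G, of _ \<xi>] by auto
    have "a = b" if eq: "\<xi> u = \<xi> w"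
    proof -
      have "w \<in> Gamma G \<xi> u" using adj_Gamma[of u G w \<xi>] uw[OF uw1(1)] uw1(1) eq
        unfolding adjacent_def by auto
      then show "a = b" using repf_eq[of u G w \<xi>] uw[OF uw1(1)] uw1 by simp
    qed
    then show ?thesis using ab xu A[OF uw1(1)] by auto
  qed
  show ?thesis unfolding Strict_def Hom_def mem_Collect_eq using P1 P2 by blast
qed



lemma Hom_PiE: "\<xi> \<in> Hom G X \<Longrightarrow> \<xi> \<in> verts G \<rightarrow>\<^sub>E verts X"
  unfolding Hom_def by auto

lemma Hom_arc: "\<xi> \<in> Hom G X \<Longrightarrow> (u,w) \<in> arcs G \<Longrightarrow> (\<xi> u, \<xi> w) \<in> arcs X"
  unfolding Hom_def by auto

lemma Strict_Hom: "\<xi> \<in> Strict G X \<Longrightarrow> \<xi> \<in> Hom G X"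
  unfolding Strict_def by auto

lemma Strict_ne: "\<xi> \<in> Strict G X \<Longrightarrow> (u,w) \<in> arcs G \<Longrightarrow> u \<noteq> w \<Longrightarrow> \<xi> u \<noteq> \<xi> w"
  unfolding Strict_def by auto

lemma fin_Hom: "finite (verts G) \<Longrightarrow> finite (verts X) \<Longrightarrow> finite (Hom G X)"
  by (rule finite_subset[of _ "verts G \<rightarrow>\<^sub>E verts X"]) (auto simp: Hom_def intro: finite_PiE)

lemma fin_Strict: "finite (verts G) \<Longrightarrow> finite (verts X) \<Longrightarrow> finite (Strict G X)"
  using fin_Hom by (rule finite_subset[rotated]) (auto simp: Strict_def)

lemma construct:
  fixes R :: "'a digraph" and S :: "'b digraph" and F :: "nat digraph \<Rightarrow> nat digraph"
    and Dr :: "nat digraph set"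
  assumes Rd: "is_digraph R" and Sd: "is_digraph S"
    and DrG: "\<And>G. G \<in> Dr \<Longrightarrow> is_digraph G"
    and FV: "\<And>Q. verts (F Q) = verts Q" and FA: "\<And>Q. arcs Q \<subseteq> arcs (F Q)"
    and FC: "\<And>G \<xi>. G \<in> Dr \<Longrightarrow> \<xi> \<in> Hom G R \<Longrightarrow>
               card (Strict (F (Qg G \<xi>)) R) \<le> card (Strict (F (Qg G \<xi>)) S)"
    and FS: "\<And>G \<xi>. G \<in> Dr \<Longrightarrow> \<xi> \<in> Hom G R \<Longrightarrow>
               restrict \<xi> (verts (Qg G \<xi>)) \<in> Strict (F (Qg G \<xi>)) R"
  shows "gamma_below Dr R S"
proof -
  define \<iota> :: "nat digraph \<Rightarrow> (nat \<Rightarrow> 'a) \<Rightarrow> (nat \<Rightarrow> 'b)" where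
    "\<iota> H = (SOME f. f ` Strict H R \<subseteq> Strict H S \<and> inj_on f (Strict H R))" for H
  define \<rho> where "\<rho> G \<xi> = restrict (\<lambda>v. \<iota> (F (Qg G \<xi>)) (restrict \<xi> (verts (Qg G \<xi>))) (repf G \<xi> v)) (verts G)"
    for G \<xi>
  have \<iota>p: "\<iota> (F (Qg G \<xi>)) ` Strict (F (Qg G \<xi>)) R \<subseteq> Strict (F (Qg G \<xi>)) S
     \<and> inj_on (\<iota> (F (Qg G \<xi>))) (Strict (F (Qg G \<xi>)) R)" if G: "G \<in> Dr" and xi: "\<xi> \<in> Hom G R" for G \<xi>
  proof -
    have fin: "finite (verts (F (Qg G \<xi>)))" using Qg_digraph[OF DrG[OF G], of \<xi>] FV
      unfolding is_digraph_def by simp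
    have "\<exists>f. f ` Strict (F (Qg G \<xi>)) R \<subseteq> Strict (F (Qg G \<xi>)) S \<and> inj_on f (Strict (F (Qg G \<xi>)) R)"
      using card_le_inj[OF fin_Strict[OF fin] fin_Strict[OF fin] FC[OF G xi]] Rd Sd
      unfolding is_digraph_def by blast
    then show ?thesis unfolding \<iota>_def by (rule someI_ex)
  qed
  have key: "\<rho> G \<xi> \<in> Hom G S \<and> (\<forall>v \<in> verts G. Gamma G (\<rho> G \<xi>) v = Gamma G \<xi> v)"
    if G: "G \<in> Dr" and xi: "\<xi> \<in> Hom G R" for G \<xi>
  proof -
    have Gd: "is_digraph G" using DrG[OF G] .
    define H where "H = F (Qg G \<xi>)"
    define \<eta> where "\<eta> = \<iota> H (restrict \<xi> (verts (Qg G \<xi>)))"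
    have eta: "\<eta> \<in> Strict H S" using \<iota>p[OF G xi] FS[OF G xi] unfolding \<eta>_def H_def by blast
    have rho: "\<rho> G \<xi> v = \<eta> (repf G \<xi> v)" if "v \<in> verts G" for v
      using that unfolding \<rho>_def \<eta>_def H_def by simp
    have arcH: "(repf G \<xi> u, repf G \<xi> w) \<in> arcs H" if "(u,w) \<in> arcs G" for u w
      using Qg_arc[OF that, of \<xi>] FA unfolding H_def by blast
    have vH: "repf G \<xi> v \<in> verts H" if "v \<in> verts G" for v
      using that unfolding H_def FV verts_Qg by simp
    have uwv: "u \<in> verts G \<and> w \<in> verts G" if "(u,w) \<in> arcs G" for u w
      using that Gd unfolding is_digraph_def by auto
    have hom: "\<rho> G \<xi> \<in> Hom G S"
      unfolding Hom_def mem_Collect_eq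
    proof (intro conjI)
      show "\<rho> G \<xi> \<in> verts G \<rightarrow>\<^sub>E verts S"
        using Hom_PiE[OF Strict_Hom[OF eta]] vH rho unfolding \<rho>_def by (auto simp: PiE_iff)
      show "\<forall>(v,w) \<in> arcs G. (\<rho> G \<xi> v, \<rho> G \<xi> w) \<in> arcs S"
        using Hom_arc[OF Strict_Hom[OF eta] arcH] rho uwv by auto
    qed
    have adj: "\<rho> G \<xi> u = \<rho> G \<xi> w \<longleftrightarrow> \<xi> u = \<xi> w"
      if uw: "u \<in> verts G" "w \<in> verts G" "adjacent G u w" for u w
    proof
      assume "\<xi> u = \<xi> w"
      then have "w \<in> Gamma G \<xi> u" using adj_Gamma uw by metis
      then have "repf G \<xi> w = repf G \<xi> u" using repf_eq uw by metis
      then show "\<rho> G \<xi> u = \<rho> G \<xi> w" using rho uw by simp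
    next
      assume eq: "\<rho> G \<xi> u = \<rho> G \<xi> w"
      show "\<xi> u = \<xi> w"
      proof (rule ccontr)
        assume ne: "\<xi> u \<noteq> \<xi> w"
        have "repf G \<xi> u \<noteq> repf G \<xi> w" using ne repf_props(2)[OF Gd uw(1), of \<xi>]
          repf_props(2)[OF Gd uw(2), of \<xi>] by metis
        moreover have "(repf G \<xi> u, repf G \<xi> w) \<in> arcs H \<or> (repf G \<xi> w, repf G \<xi> u) \<in> arcs H"
          using uw(3) arcH unfolding adjacent_def by blast
        ultimately have "\<eta> (repf G \<xi> u) \<noteq> \<eta> (repf G \<xi> w)"
          using Strict_ne[OF eta] by metis
        then show False using eq rho uw by simp
      qed
    qed
    have "\<forall>v \<in> verts G. Gamma G (\<rho> G \<xi>) v = Gamma G \<xi> v"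
      using Gamma_cong[of _ G "\<rho> G \<xi>" \<xi>] adj by blast
    then show ?thesis using hom by blast
  qed
  have inj: "inj_on (\<rho> G) (Hom G R)" if G: "G \<in> Dr" for G
  proof
    fix \<xi>1 \<xi>2 assume x1: "\<xi>1 \<in> Hom G R" and x2: "\<xi>2 \<in> Hom G R" and eq: "\<rho> G \<xi>1 = \<rho> G \<xi>2"
    have Gd: "is_digraph G" using DrG[OF G] .
    have Geq: "Gamma G \<xi>1 v = Gamma G \<xi>2 v" if "v \<in> verts G" for v
      using key[OF G x1] key[OF G x2] eq that by metis
    then have req: "repf G \<xi>1 v = repf G \<xi>2 v" if "v \<in> verts G" for v
      using that unfolding repf_def by simp
    have uwv: "u \<in> verts G \<and> w \<in> verts G" if "(u,w) \<in> arcs G" for u w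
      using that Gd unfolding is_digraph_def by auto
    have Qeq: "Qg G \<xi>1 = Qg G \<xi>2"
      unfolding Qg_def
    proof (intro arg_cong2[where f=Pair])
      show "repf G \<xi>1 ` verts G = repf G \<xi>2 ` verts G" using req by (rule image_cong[OF refl])
      show "(\<lambda>(u,w). (repf G \<xi>1 u, repf G \<xi>1 w)) ` arcs G = (\<lambda>(u,w). (repf G \<xi>2 u, repf G \<xi>2 w)) ` arcs G"
        by (rule image_cong[OF refl]) (use req uwv in auto)
    qed
    define Q where "Q = Qg G \<xi>1"
    define \<eta>1 where "\<eta>1 = \<iota> (F Q) (restrict \<xi>1 (verts Q))"
    define \<eta>2 where "\<eta>2 = \<iota> (F Q) (restrict \<xi>2 (verts Q))"
    have s1: "restrict \<xi>1 (verts Q) \<in> Strict (F Q) R" using FS[OF G x1] unfolding Q_def .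
    have s2: "restrict \<xi>2 (verts Q) \<in> Strict (F Q) R" using FS[OF G x2] unfolding Q_def Qeq .
    have e1: "\<eta>1 \<in> Strict (F Q) S" using \<iota>p[OF G x1] s1 unfolding \<eta>1_def Q_def by blast
    have e2: "\<eta>2 \<in> Strict (F Q) S" using \<iota>p[OF G x1] s2 unfolding \<eta>2_def Q_def by blast
    have r1: "\<rho> G \<xi>1 v = \<eta>1 (repf G \<xi>1 v)" if "v \<in> verts G" for v
      using that unfolding \<rho>_def \<eta>1_def Q_def by simp
    have r2: "\<rho> G \<xi>2 v = \<eta>2 (repf G \<xi>1 v)" if "v \<in> verts G" for v
      using that req[OF that] unfolding \<rho>_def \<eta>2_def Q_def Qeq by simp
    have "\<eta>1 = \<eta>2"
    proof (rule PiE_ext[OF Hom_PiE[OF Strict_Hom[OF e1]] Hom_PiE[OF Strict_Hom[OF e2]]])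
      fix q assume "q \<in> verts (F Q)"
      then obtain v where v: "v \<in> verts G" "q = repf G \<xi>1 v" unfolding FV Q_def verts_Qg by auto
      show "\<eta>1 q = \<eta>2 q" using r1[OF v(1)] r2[OF v(1)] eq v(2) by simp
    qed
    then have "restrict \<xi>1 (verts Q) = restrict \<xi>2 (verts Q)"
      using \<iota>p[OF G x1] s1 s2 unfolding \<eta>1_def \<eta>2_def Q_def by (meson inj_onD)
    then have "\<xi>1 v = \<xi>2 v" if v: "v \<in> verts G" for v
    proof -
      assume rr: "restrict \<xi>1 (verts Q) = restrict \<xi>2 (verts Q)"
      have q: "repf G \<xi>1 v \<in> verts Q" using v unfolding Q_def verts_Qg by simp
      have "\<xi>1 v = \<xi>1 (repf G \<xi>1 v)" using repf_props(2)[OF Gd v, of \<xi>1] by simp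
      also have "\<dots> = \<xi>2 (repf G \<xi>1 v)" using rr q by (metis restrict_apply')
      also have "\<dots> = \<xi>2 (repf G \<xi>2 v)" using req[OF v] by simp
      also have "\<dots> = \<xi>2 v" using repf_props(2)[OF Gd v, of \<xi>2] by simp
      finally show ?thesis .
    qed
    then show "\<xi>1 = \<xi>2" using PiE_ext[OF Hom_PiE[OF x1] Hom_PiE[OF x2]] by blast
  qed
  show ?thesis
    unfolding gamma_below_def hom_scheme_def strong_scheme_def Gamma_scheme_def
    using key inj by blast
qed



lemma iso_sym:
  assumes "digraph_iso G H" shows "digraph_iso H G"
proof -
  obtain f where f: "bij_betw f (verts G) (verts H)"
    "\<forall>v \<in> verts G. \<forall>w \<in> verts G. (v, w) \<in> arcs G \<longleftrightarrow> (f v, f w) \<in> arcs H"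
    using assms unfolding digraph_iso_def by blast
  define g where "g = inv_into (verts G) f"
  have g: "bij_betw g (verts H) (verts G)" using bij_betw_inv_into[OF f(1)] unfolding g_def .
  have fg: "f (g v) = v" if "v \<in> verts H" for v
    using that f(1) unfolding g_def by (simp add: bij_betw_def f_inv_into_f)
  have "\<forall>v \<in> verts H. \<forall>w \<in> verts H. (v, w) \<in> arcs H \<longleftrightarrow> (g v, g w) \<in> arcs G"
  proof (intro ballI)
    fix v w assume vw: "v \<in> verts H" "w \<in> verts H"
    have gv: "g v \<in> verts G" "g w \<in> verts G" using g vw by (auto simp: bij_betw_def)
    have "(g v, g w) \<in> arcs G \<longleftrightarrow> (f (g v), f (g w)) \<in> arcs H" using f(2) gv by blast
    then show "(v, w) \<in> arcs H \<longleftrightarrow> (g v, g w) \<in> arcs G" using fg[OF vw(1)] fg[OF vw(2)] by simp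
  qed
  then show ?thesis unfolding digraph_iso_def using g by blast
qed

lemma iso_card_le:
  fixes G :: "'a digraph" and H :: "'c digraph" and X :: "'d digraph"
  assumes G: "is_digraph G" and X: "is_digraph X" and iso: "digraph_iso G H"
  shows "card (Hom H X) \<le> card (Hom G X) \<and> card (Strict H X) \<le> card (Strict G X)"
proof -
  obtain f where f: "bij_betw f (verts G) (verts H)"
    "\<forall>v \<in> verts G. \<forall>w \<in> verts G. (v, w) \<in> arcs G \<longleftrightarrow> (f v, f w) \<in> arcs H"
    using iso unfolding digraph_iso_def by blast
  define \<Phi> where "\<Phi> \<eta> = restrict (\<eta> \<circ> f) (verts G)" for \<eta> :: "'c \<Rightarrow> 'd"
  have uwv: "u \<in> verts G \<and> w \<in> verts G" if "(u,w) \<in> arcs G" for u w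
    using that G unfolding is_digraph_def by auto
  have fv: "f v \<in> verts H" if "v \<in> verts G" for v using f(1) that by (auto simp: bij_betw_def)
  have map1: "\<Phi> \<eta> \<in> Hom G X" if "\<eta> \<in> Hom H X" for \<eta>
  proof -
    have "\<Phi> \<eta> \<in> verts G \<rightarrow>\<^sub>E verts X"
      unfolding \<Phi>_def using Hom_PiE[OF that] fv by (auto simp: PiE_iff)
    moreover have "(\<Phi> \<eta> u, \<Phi> \<eta> w) \<in> arcs X" if a: "(u,w) \<in> arcs G" for u w
    proof -
      have "(f u, f w) \<in> arcs H" using f(2) uwv[OF a] a by blast
      then show ?thesis using Hom_arc[OF \<open>\<eta> \<in> Hom H X\<close>] uwv[OF a] unfolding \<Phi>_def by simp
    qed
    ultimately show ?thesis unfolding Hom_def by blast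
  qed
  have map2: "\<Phi> \<eta> \<in> Strict G X" if "\<eta> \<in> Strict H X" for \<eta>
  proof -
    have "\<forall>(u,w) \<in> arcs G. u \<noteq> w \<longrightarrow> \<Phi> \<eta> u \<noteq> \<Phi> \<eta> w"
    proof (intro ballI, clarify)
      fix u w assume a: "(u,w) \<in> arcs G" "u \<noteq> w" "\<Phi> \<eta> u = \<Phi> \<eta> w"
      have "f u \<noteq> f w" using f(1) uwv[OF a(1)] a(2) unfolding bij_betw_def inj_on_def by blast
      moreover have "(f u, f w) \<in> arcs H" using f(2) a(1) uwv[OF a(1)] by blast
      ultimately have "\<eta> (f u) \<noteq> \<eta> (f w)" using Strict_ne[OF that] by blast
      then show False using a uwv[OF a(1)] unfolding \<Phi>_def by simp
    qed
    with map1[OF Strict_Hom[OF that]] show ?thesis unfolding Strict_def by (intro CollectI conjI)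
  qed
  have inj: "inj_on \<Phi> (Hom H X)"
  proof
    fix \<eta>1 \<eta>2 assume e: "\<eta>1 \<in> Hom H X" "\<eta>2 \<in> Hom H X" "\<Phi> \<eta>1 = \<Phi> \<eta>2"
    show "\<eta>1 = \<eta>2"
    proof (rule PiE_ext[OF Hom_PiE[OF e(1)] Hom_PiE[OF e(2)]])
      fix y assume "y \<in> verts H"
      then obtain x where x: "x \<in> verts G" "y = f x" using f(1) by (auto simp: bij_betw_def)
      have "\<Phi> \<eta>1 x = \<Phi> \<eta>2 x" using e(3) by simp
      then show "\<eta>1 y = \<eta>2 y" using x unfolding \<Phi>_def by simp
    qed
  qed
  have fin: "finite (Hom G X)" "finite (Strict G X)"
  proof -
    have "finite (verts G)" "finite (verts X)" using G X unfolding is_digraph_def by auto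
    then show "finite (Hom G X)" "finite (Strict G X)" by (rule fin_Hom, rule fin_Strict)
  qed
  have i1: "\<Phi> ` Hom H X \<subseteq> Hom G X" using map1 by blast
  have i2: "\<Phi> ` Strict H X \<subseteq> Strict G X" using map2 by blast
  have sub: "Strict H X \<subseteq> Hom H X" using Strict_Hom by blast
  have "card (Hom H X) \<le> card (Hom G X)"
    using card_inj_on_le[OF inj i1 fin(1)] .
  moreover have "card (Strict H X) \<le> card (Strict G X)"
    using card_inj_on_le[OF inj_on_subset[OF inj sub] i2 fin(2)] .
  ultimately show ?thesis by blast
qed

lemma iso_card_eq:
  assumes "is_digraph G" "is_digraph H" "is_digraph X" "digraph_iso G H"
  shows "card (Hom G X) = card (Hom H X) \<and> card (Strict G X) = card (Strict H X)"
  using iso_card_le[OF assms(1,3,4)] iso_card_le[OF assms(2,3) iso_sym[OF assms(4)]] by linarith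

lemma arcs_loopfree: "arcs (loopfree G) = {(v, w) \<in> arcs G. v \<noteq> w}"
  and verts_loopfree: "verts (loopfree G) = verts G"
  unfolding loopfree_def arcs_def verts_def by simp_all

lemma strict_Ta:
  assumes Q: "is_digraph Q" and eta: "\<eta> \<in> Strict Q R" and R: "in_Ta R"
  shows "in_Ta Q"
  unfolding in_Ta_def
proof (intro conjI notI)
  show "is_digraph Q" by fact
next
  assume "\<exists>vs. is_closed_walk (loopfree Q) vs"
  then obtain vs where vs: "is_closed_walk (loopfree Q) vs" by blast
  have ne: "vs \<noteq> []" using vs unfolding is_closed_walk_def is_walk_def by auto
  have "is_closed_walk (loopfree R) (map \<eta> vs)"
    unfolding is_closed_walk_def is_walk_def
  proof (intro conjI allI impI)
    show "2 \<le> length (map \<eta> vs)" using vs unfolding is_closed_walk_def is_walk_def by simp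
    show "hd (map \<eta> vs) = last (map \<eta> vs)"
      using vs ne unfolding is_closed_walk_def by (simp add: hd_map last_map)
    fix i assume i: "Suc i < length (map \<eta> vs)"
    then have "(vs ! i, vs ! Suc i) \<in> arcs (loopfree Q)"
      using vs unfolding is_closed_walk_def is_walk_def by simp
    then have a: "(vs ! i, vs ! Suc i) \<in> arcs Q" "vs ! i \<noteq> vs ! Suc i" unfolding arcs_loopfree by auto
    have "(\<eta> (vs ! i), \<eta> (vs ! Suc i)) \<in> arcs R" using Hom_arc[OF Strict_Hom[OF eta] a(1)] .
    moreover have "\<eta> (vs ! i) \<noteq> \<eta> (vs ! Suc i)" using Strict_ne[OF eta a] .
    ultimately show "(map \<eta> vs ! i, map \<eta> vs ! Suc i) \<in> arcs (loopfree R)"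
      using i unfolding arcs_loopfree by simp
  qed
  then show False using R unfolding in_Ta_def by blast
qed

lemma tc_strict:
  assumes eta: "\<eta> \<in> Strict Q R" and R: "is_poset R" and pq: "(p,q) \<in> (arcs Q)\<^sup>+"
  shows "(\<eta> p, \<eta> q) \<in> arcs R \<and> (\<eta> p = \<eta> q \<longrightarrow> p = q)"
  using pq
proof (induction rule: trancl_induct)
  case (base y)
  then show ?case using Hom_arc[OF Strict_Hom[OF eta]] Strict_ne[OF eta] by blast
next
  case (step y z)
  have yz: "(\<eta> y, \<eta> z) \<in> arcs R" using Hom_arc[OF Strict_Hom[OF eta] step(2)] .
  have tr: "(\<eta> p, \<eta> z) \<in> arcs R" using step(3) yz R unfolding is_poset_def by blast
  have "p = z" if e: "\<eta> p = \<eta> z"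
  proof -
    have anti: "\<And>a b. (a,b) \<in> arcs R \<Longrightarrow> (b,a) \<in> arcs R \<Longrightarrow> a = b"
      using R unfolding is_poset_def by blast
    have "(\<eta> z, \<eta> y) \<in> arcs R" using step(3) e by simp
    then have "\<eta> y = \<eta> z" using anti yz by blast
    then have "y = z" using Strict_ne[OF eta step(2)] by blast
    moreover have "p = y" using step(3) \<open>\<eta> y = \<eta> z\<close> e by simp
    ultimately show ?thesis by simp
  qed
  then show ?case using tr by blast
qed

lemma poset_quot:
  assumes Q: "is_digraph Q" and refl: "\<forall>q \<in> verts Q. (q,q) \<in> arcs Q"
    and eta: "\<eta> \<in> Strict Q R" and R: "is_poset R"
  shows "is_poset (verts Q, (arcs Q)\<^sup>+) \<and> \<eta> \<in> Strict (verts Q, (arcs Q)\<^sup>+) R"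
proof -
  define T where "T = (verts Q, (arcs Q)\<^sup>+)"
  have vT: "verts T = verts Q" and aT: "arcs T = (arcs Q)\<^sup>+" unfolding T_def verts_def arcs_def by simp_all
  have sub: "arcs Q \<subseteq> verts Q \<times> verts Q" using Q unfolding is_digraph_def by simp
  have p1: "is_poset T"
    unfolding is_poset_def
  proof (intro conjI allI impI ballI)
    show "is_digraph T" using Q trancl_subset_Sigma[OF sub] unfolding is_digraph_def vT aT by simp
    show "(v,v) \<in> arcs T" if "v \<in> verts T" for v using refl that unfolding vT aT by auto
    show "v = w" if "(v, w) \<in> arcs T \<and> (w, v) \<in> arcs T" for v w
    proof -
      have "(\<eta> v, \<eta> w) \<in> arcs R" "(\<eta> w, \<eta> v) \<in> arcs R" "\<eta> v = \<eta> w \<longrightarrow> v = w"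
        using tc_strict[OF eta R] that unfolding aT by blast+
      then show ?thesis using R unfolding is_poset_def by blast
    qed
    show "(u, w) \<in> arcs T" if "(u, v) \<in> arcs T \<and> (v, w) \<in> arcs T" for u v w
      using that unfolding aT by (meson trancl_trans)
  qed
  have p2: "\<eta> \<in> Strict T R"
    unfolding Strict_def Hom_def mem_Collect_eq vT aT
  proof (intro conjI)
    show "\<eta> \<in> verts Q \<rightarrow>\<^sub>E verts R" using Hom_PiE[OF Strict_Hom[OF eta]] .
    show "\<forall>(v, w)\<in>(arcs Q)\<^sup>+. (\<eta> v, \<eta> w) \<in> arcs R" using tc_strict[OF eta R] by blast
    show "\<forall>(v, w)\<in>(arcs Q)\<^sup>+. v \<noteq> w \<longrightarrow> \<eta> v \<noteq> \<eta> w" using tc_strict[OF eta R] by blast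
  qed
  show ?thesis using p1 p2 unfolding T_def by simp
qed



lemma star_Qg:
  assumes G: "is_digraph G" and R: "is_poset_star R" and xi: "\<xi> \<in> Hom G R"
  shows "Qg G \<xi> = G"
proof -
  have ll: "a \<noteq> b" if "(a,b) \<in> arcs R" for a b
    using R that unfolding is_poset_star_def by (auto simp: arcs_loopfree)
  have st: "\<xi> \<in> Strict G R" unfolding Strict_def using xi Hom_arc[OF xi] ll by blast
  have rv: "repf G \<xi> v = v" if "v \<in> verts G" for v
    unfolding repf_def using strict_Gamma[OF G st that] by simp
  have uwv: "u \<in> verts G \<and> w \<in> verts G" if "(u,w) \<in> arcs G" for u w
    using that G unfolding is_digraph_def by auto
  have "repf G \<xi> ` verts G = verts G" using rv by simp
  moreover have "(\<lambda>(u,w). (repf G \<xi> u, repf G \<xi> w)) ` arcs G = arcs G"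
  proof -
    have "(\<lambda>(u,w). (repf G \<xi> u, repf G \<xi> w)) ` arcs G = (\<lambda>p. p) ` arcs G"
      by (rule image_cong[OF refl]) (use rv uwv in auto)
    then show ?thesis by simp
  qed
  ultimately show ?thesis unfolding Qg_def verts_def arcs_def by simp
qed

lemma poset_digraph: "is_poset G \<Longrightarrow> is_digraph G"
  unfolding is_poset_def by (rule conjunct1)

lemma verts_pair: "verts (A, B) = A" and arcs_pair: "arcs (A, B) = B"
  unfolding verts_def arcs_def by simp_all

theorem theorem2:
  fixes R :: "'a digraph" and S :: "'b digraph"
    and D' Dr :: "nat digraph set"
  assumes R: "is_digraph R"
    and Dr: "rep_system Dr D'"
    and cases: "D' = {G. is_digraph G}
        \<or> (in_Ta R \<and> {G. in_Ta G} \<subseteq> D' \<and> D' \<subseteq> {G. is_digraph G})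
        \<or> (D' = {G. is_poset G} \<and> is_poset R)
        \<or> (D' = {G. is_poset_star G} \<and> is_poset_star R)"
    and S: "is_digraph S"
  shows "(gamma_below Dr R S \<longleftrightarrow> (\<forall>G \<in> D'. card (Strict G R) \<le> card (Strict G S)))
     \<and> ((\<forall>G \<in> D'. card (Strict G R) \<le> card (Strict G S))
          \<longrightarrow> (\<forall>G \<in> D'. card (Hom G R) \<le> card (Hom G S)))"
proof -
  have Dr_sub: "Dr \<subseteq> D'" using Dr unfolding rep_system_def by blast
  have rep: "\<exists>H \<in> Dr. digraph_iso G H" if "G \<in> D'" for G
    using Dr that unfolding rep_system_def by blast
  have Dd: "is_digraph G" if GD: "G \<in> D'" for G
    using cases
  proof (elim disjE conjE)
    assume "D' = {G. is_digraph G}" then show ?thesis using GD by simp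
  next
    assume "D' \<subseteq> {G. is_digraph G}" then show ?thesis using GD by blast
  next
    assume "D' = {G. is_poset G}" then have "is_poset G" using GD by simp
    then show ?thesis by (rule poset_digraph)
  next
    assume "D' = {G. is_poset_star G}"
    then obtain P where P: "is_poset P" "G = loopfree P" using GD unfolding is_poset_star_def by auto
    have "is_digraph P" using P(1) by (rule poset_digraph)
    then show ?thesis unfolding P(2) is_digraph_def verts_loopfree arcs_loopfree by blast
  qed
  have DrG: "is_digraph G" if "G \<in> Dr" for G using Dd Dr_sub that by blast
  have tS: "card (Strict G R) \<le> card (Strict G S)"
    if GD: "G \<in> D'" and hyp: "\<forall>H \<in> Dr. card (Strict H R) \<le> card (Strict H S)" for G
  proof -
    obtain H where H: "H \<in> Dr" "digraph_iso G H" using rep[OF GD] by blast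
    show ?thesis using iso_card_eq[OF Dd[OF GD] DrG[OF H(1)] R H(2)]
      iso_card_eq[OF Dd[OF GD] DrG[OF H(1)] S H(2)] hyp H(1) by simp
  qed
  have tH: "card (Hom G R) \<le> card (Hom G S)"
    if GD: "G \<in> D'" and hyp: "\<forall>H \<in> Dr. card (Hom H R) \<le> card (Hom H S)" for G
  proof -
    obtain H where H: "H \<in> Dr" "digraph_iso G H" using rep[OF GD] by blast
    show ?thesis using iso_card_eq[OF Dd[OF GD] DrG[OF H(1)] R H(2)]
      iso_card_eq[OF Dd[OF GD] DrG[OF H(1)] S H(2)] hyp H(1) by simp
  qed
  have AtoDr: "card (Strict H R) \<le> card (Strict H S) \<and> card (Hom H R) \<le> card (Hom H S)"
    if gb: "gamma_below Dr R S" and H: "H \<in> Dr" for H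
  proof -
    obtain \<rho> where \<rho>: "hom_scheme Dr R S \<rho>" "strong_scheme Dr R \<rho>" "Gamma_scheme Dr R \<rho>"
      using gb unfolding gamma_below_def by blast
    have Hd: "is_digraph H" using DrG[OF H] .
    have inj: "inj_on (\<rho> H) (Hom H R)" using \<rho>(2) H unfolding strong_scheme_def by blast
    have hom: "\<rho> H \<xi> \<in> Hom H S" if "\<xi> \<in> Hom H R" for \<xi>
      using \<rho>(1) H that unfolding hom_scheme_def by blast
    have gam: "Gamma H (\<rho> H \<xi>) v = Gamma H \<xi> v" if "\<xi> \<in> Hom H R" "v \<in> verts H" for \<xi> v
      using \<rho>(3) H that unfolding Gamma_scheme_def by blast
    have st: "\<rho> H \<xi> \<in> Strict H S" if "\<xi> \<in> Strict H R" for \<xi>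
    proof -
      have x: "\<xi> \<in> Hom H R" using Strict_Hom[OF that] .
      have "\<forall>v \<in> verts H. Gamma H (\<rho> H \<xi>) v = {v}"
        using gam[OF x] strict_Gamma[OF Hd that] by simp
      then show ?thesis using Gamma_strict[OF Hd hom[OF x]] by blast
    qed
    have fv: "finite (verts H)" "finite (verts S)" using Hd S unfolding is_digraph_def by auto
    have i1: "\<rho> H ` Hom H R \<subseteq> Hom H S" using hom by blast
    have i2: "\<rho> H ` Strict H R \<subseteq> Strict H S" using st by blast
    have sub: "Strict H R \<subseteq> Hom H R" using Strict_Hom by blast
    have "card (Hom H R) \<le> card (Hom H S)"
      using card_inj_on_le[OF inj i1 fin_Hom[OF fv]] .
    moreover have "card (Strict H R) \<le> card (Strict H S)"
      using card_inj_on_le[OF inj_on_subset[OF inj sub] i2 fin_Strict[OF fv]] .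
    ultimately show ?thesis by blast
  qed
  have BtoA: "gamma_below Dr R S" if B: "\<forall>G \<in> D'. card (Strict G R) \<le> card (Strict G S)"
    using cases
  proof (elim disjE conjE)
    assume D: "D' = {G. is_digraph G}"
    show ?thesis
    proof (rule construct[where F="\<lambda>Q. Q", OF R S DrG])
      fix G \<xi> assume G: "G \<in> Dr" and xi: "\<xi> \<in> Hom G R"
      show "card (Strict (Qg G \<xi>) R) \<le> card (Strict (Qg G \<xi>) S)"
        using B Qg_digraph[OF DrG[OF G]] D by blast
      show "restrict \<xi> (verts (Qg G \<xi>)) \<in> Strict (Qg G \<xi>) R" using Qg_strict[OF DrG[OF G] xi] .
    qed auto
  next
    assume Ta: "in_Ta R" "{G. in_Ta G} \<subseteq> D'"
    show ?thesis
    proof (rule construct[where F="\<lambda>Q. Q", OF R S DrG])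
      fix G \<xi> assume G: "G \<in> Dr" and xi: "\<xi> \<in> Hom G R"
      have "in_Ta (Qg G \<xi>)"
        using strict_Ta[OF Qg_digraph[OF DrG[OF G]] Qg_strict[OF DrG[OF G] xi] Ta(1)] .
      then show "card (Strict (Qg G \<xi>) R) \<le> card (Strict (Qg G \<xi>) S)"
        using B Ta(2) by blast
      show "restrict \<xi> (verts (Qg G \<xi>)) \<in> Strict (Qg G \<xi>) R" using Qg_strict[OF DrG[OF G] xi] .
    qed auto
  next
    assume D: "D' = {G. is_poset G}" and Rp: "is_poset R"
    show ?thesis
    proof (rule construct[where F="\<lambda>Q. (verts Q, (arcs Q)\<^sup>+)", OF R S DrG])
      fix G \<xi> assume G: "G \<in> Dr" and xi: "\<xi> \<in> Hom G R"
      have Gp: "is_poset G" using G Dr_sub D by blast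
      have refl: "\<forall>q \<in> verts (Qg G \<xi>). (q,q) \<in> arcs (Qg G \<xi>)"
        using Gp Qg_arc unfolding verts_Qg is_poset_def by blast
      have pq: "is_poset (verts (Qg G \<xi>), (arcs (Qg G \<xi>))\<^sup>+)
          \<and> restrict \<xi> (verts (Qg G \<xi>)) \<in> Strict (verts (Qg G \<xi>), (arcs (Qg G \<xi>))\<^sup>+) R"
        using poset_quot[OF Qg_digraph[OF DrG[OF G]] refl Qg_strict[OF DrG[OF G] xi] Rp] .
      then show "card (Strict (verts (Qg G \<xi>), (arcs (Qg G \<xi>))\<^sup>+) R)
          \<le> card (Strict (verts (Qg G \<xi>), (arcs (Qg G \<xi>))\<^sup>+) S)"
        using B D by blast
      show "restrict \<xi> (verts (Qg G \<xi>)) \<in> Strict (verts (Qg G \<xi>), (arcs (Qg G \<xi>))\<^sup>+) R"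
        using pq by blast
    qed (auto simp: verts_pair arcs_pair)
  next
    assume D: "D' = {G. is_poset_star G}" and Rp: "is_poset_star R"
    show ?thesis
    proof (rule construct[where F="\<lambda>Q. Q", OF R S DrG])
      fix G \<xi> assume G: "G \<in> Dr" and xi: "\<xi> \<in> Hom G R"
      have "Qg G \<xi> = G" using star_Qg[OF DrG[OF G] Rp xi] .
      then show "card (Strict (Qg G \<xi>) R) \<le> card (Strict (Qg G \<xi>) S)"
        using B G Dr_sub by auto
      show "restrict \<xi> (verts (Qg G \<xi>)) \<in> Strict (Qg G \<xi>) R" using Qg_strict[OF DrG[OF G] xi] .
    qed auto
  qed
  show ?thesis
  proof (intro conjI impI iffI)
    assume "gamma_below Dr R S"
    then show "\<forall>G \<in> D'. card (Strict G R) \<le> card (Strict G S)"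
      using tS AtoDr by blast
  next
    assume "\<forall>G \<in> D'. card (Strict G R) \<le> card (Strict G S)"
    then show "gamma_below Dr R S" using BtoA by blast
  next
    assume "\<forall>G \<in> D'. card (Strict G R) \<le> card (Strict G S)"
    then have "gamma_below Dr R S" using BtoA by blast
    then show "\<forall>G \<in> D'. card (Hom G R) \<le> card (Hom G S)"
      using tH AtoDr by blast
  qed
qed


end
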